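(* Let $q\geq 3$ be an integer, let $\tau\geq 0$ be real, and let $\epsilon\in(0,1)$ be small. Set $$R=\min_{\substack{\gamma\in[0,q-1),\ \kappa\in[0,\frac{q-1}{q}),\\ \gamma+\kappa=\tau}}\left[1-(2\gamma-\kappa+1)H_q\!\left(\frac{\gamma}{2\gamma-\kappa+1}\right)+\gamma\log_q(q-1)-H_q(\kappa)\right]-\epsilon .$$ Then for all sufficiently large $n$, with probability at least $1-q^{-n}$, a random insdel code $\mathcal{C}\subseteq\Sigma_q^n$ of rate $R$ is $(\tau n,O(1/\epsilon))$-list-decodable.
   Context: $\Sigma_q$ is a finite alphabet of size $q$. The insdel distance $d(\mathbf a,\mathbf b)$ between words $\mathbf a\in\Sigma_q^{n_1}$, $\mathbf b\in\Sigma_q^{n_2}$ (lengths may differ) is the minimum number of single-symbol insertions and deletions needed to transform $\mathbf a$ into $\mathbf b$. For $\mathbf u\in\Sigma_q^n$ and real $z\ge 0$, the insdel ball is $\mathcal{B}(\mathbf u,z)=\{\mathbf v\in\bigcup_{i=\max\{n-z,0\}}^{n+z}\Sigma_q^i : d(\mathbf u,\mathbf v)\le z\}$. A code $\mathcal{C}\subseteq\Sigma_q^n$ is $(\tau n,L)$-list-decodable if for every nonnegative integer $m\in[\max(0,n-\tau n),n+\tau n]$ and every $\mathbf r\in\Sigma_q^m$, $|\mathcal{B}(\mathbf r,\tau n)\cap\mathcal{C}|\le L$. The rate of $\mathcal{C}$ is $\log_q|\mathcal{C}|/n$. A random insdel code of rate $R$ is a subset of $\Sigma_q^n$ of size $q^{Rn}$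 chosen uniformly at random. $H_q(x)=x\log_q(q-1)-x\log_q x-(1-x)\log_q(1-x)$ for $0<x<1$, with $H_q(0)=H_q(1)=0$. *)

theory Defs
  imports Complex_Main
begin

definition words :: "nat \<Rightarrow> nat \<Rightarrow> nat list set" where
  "words q n = {w. length w = n \<and> set w \<subseteq> {..<q}}"

definition insdel_step :: "nat list \<Rightarrow> nat list \<Rightarrow> bool" where
  "insdel_step a b \<longleftrightarrow>
     (\<exists>xs ys c. a = xs @ c # ys \<and> b = xs @ ys) \<or>
     (\<exists>xs ys c. b = xs @ c # ys \<and> a = xs @ ys)"

definition insdel_dist :: "nat list \<Rightarrow> nat list \<Rightarrow> nat" where
  "insdel_dist a b = (LEAST k. (insdel_step ^^ k) a b)"

definition insdel_ball :: "nat \<Rightarrow> nat list \<Rightarrow> real \<Rightarrow> nat list set" where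
  "insdel_ball q u z = {v. set v \<subseteq> {..<q} \<and>
      max (real (length u) - z) 0 \<le> real (length v) \<and>
      real (length v) \<le> real (length u) + z \<and>
      real (insdel_dist u v) \<le> z}"

definition list_decodable :: "nat \<Rightarrow> nat \<Rightarrow> real \<Rightarrow> real \<Rightarrow> nat list set \<Rightarrow> bool" where
  "list_decodable q n tau L C \<longleftrightarrow>
     (\<forall>m::nat. max 0 (real n - tau * n) \<le> real m \<and> real m \<le> real n + tau * n \<longrightarrow>
        (\<forall>r \<in> words q m. real (card (insdel_ball q r (tau * n) \<inter> C)) \<le> L))"

definition Hq :: "nat \<Rightarrow> real \<Rightarrow> real" where
  "Hq q x = (if 0 < x \<and> x < 1 then
     x * log q (q - 1) - x * log q x - (1 - x) * log q (1 - x) else 0)"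

text \<open>The rate bound before subtracting epsilon (the min is taken as infimum).\<close>
definition rate_fun :: "nat \<Rightarrow> real \<Rightarrow> real" where
  "rate_fun q tau = (INF p \<in> {(g, k). 0 \<le> g \<and> g < real q - 1 \<and> 0 \<le> k \<and> k < (real q - 1) / q \<and> g + k = tau}.
      (case p of (g, k) \<Rightarrow>
        1 - (2*g - k + 1) * Hq q (g / (2*g - k + 1)) + g * log q (q - 1) - Hq q k))"

text \<open>A uniformly random code of size M is list-decodable with
  probability good / (card (words q n) choose M).\<close>
definition good_codes :: "nat \<Rightarrow> nat \<Rightarrow> nat \<Rightarrow> real \<Rightarrow> real \<Rightarrow> nat list set set" where
  "good_codes q n M tau L = {C. C \<subseteq> words q n \<and> card C = M \<and> list_decodable q n tau L C}"

end

theory Submission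
  imports Defs "HOL-Library.Sublist" "HOL-Library.FuncSet"
begin

lemma del_subseq:
  assumes "subseq s (xs @ c # ys)"
  shows "\<exists>s'. subseq s' s \<and> subseq s' (xs @ ys) \<and> length s \<le> length s' + 1"
proof -
  obtain s1 s2 where s: "s = s1 @ s2" "subseq s1 xs" "subseq s2 (c # ys)"
    using assms by (auto elim: subseq_appendE)
  show ?thesis
  proof (cases s2)
    case Nil
    then show ?thesis using s by (intro exI[of _ s]) (auto intro: list_emb_append_mono)
  next
    case (Cons d s2')
    have "subseq s2' ys" using s(3) Cons
      by (metis subseq_Cons' subseq_Cons2_iff)
    have "subseq (s1 @ s2') s" unfolding s(1) Cons subseq_append'
      by (rule list_emb.list_emb_Cons) (rule subseq_order.order_refl)
    moreover have "subseq (s1 @ s2') (xs @ ys)" using s(2) \<open>subseq s2' ys\<close>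
      by (rule list_emb_append_mono)
    moreover have "length s \<le> length (s1 @ s2') + 1" using s(1) Cons by simp
    ultimately show ?thesis by blast
  qed
qed

lemma insdel_pow_common:
  "(insdel_step ^^ k) a b \<Longrightarrow> \<exists>s. subseq s a \<and> subseq s b \<and> length a + length b \<le> k + 2 * length s"
proof (induction k arbitrary: b)
  case 0
  then show ?case by (intro exI[of _ a]) auto
next
  case (Suc k)
  then obtain c where c: "(insdel_step ^^ k) a c" "insdel_step c b" by (auto elim: relpowp_Suc_E)
  from Suc.IH[OF c(1)] obtain s where s: "subseq s a" "subseq s c" "length a + length c \<le> k + 2 * length s" by blast
  from c(2) show ?case unfolding insdel_step_def
  proof (elim disjE exE conjE)
    fix xs ys d assume h: "c = xs @ d # ys" "b = xs @ ys"
    then obtain s' where "subseq s' s" "subseq s' b" "length s \<le> length s' + 1"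
      using del_subseq[of s xs d ys] s(2) h(1) by metis
    moreover have "subseq s' a" using \<open>subseq s' s\<close> s(1) by (rule subseq_order.trans)
    moreover have "length a + length b \<le> Suc k + 2 * length s'"
      using s(3) h \<open>length s \<le> length s' + 1\<close> by simp
    ultimately show ?thesis by blast
  next
    fix xs ys d assume h: "b = xs @ d # ys" "c = xs @ ys"
    have "subseq ys (d # ys)" by (rule list_emb.list_emb_Cons) (rule subseq_order.order_refl)
    then have "subseq c b" unfolding h subseq_append' .
    then have "subseq s b" using s(2) by (metis subseq_order.trans)
    moreover have "length a + length b \<le> Suc k + 2 * length s"
      using s(3) h by simp
    ultimately show ?thesis using s(1) by blast
  qed
qed

lemma pow_del_all: "(insdel_step ^^ length a) a []"
proof (induction a)
  case Nil then show ?case by simp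
next
  case (Cons x a)
  have "insdel_step (x # a) a" unfolding insdel_step_def by (rule disjI1, rule exI[of _ "[]"]) auto
  then show ?case using Cons by (metis length_Cons relpowp_Suc_I2)
qed

lemma pow_ins_all: "(insdel_step ^^ length b) [] b"
proof (induction b)
  case Nil then show ?case by simp
next
  case (Cons x b)
  have "insdel_step b (x # b)" unfolding insdel_step_def by (rule disjI2, rule exI[of _ "[]"]) auto
  then show ?case using Cons by (metis length_Cons relpowp_Suc_I)
qed

lemma insdel_dist_common:
  "\<exists>s. subseq s a \<and> subseq s b \<and> length a + length b \<le> insdel_dist a b + 2 * length s"
proof -
  have "(insdel_step ^^ (length a + length b)) a b"
    using pow_del_all[of a] pow_ins_all[of b] by (auto simp: relpowp_add)
  then have "(insdel_step ^^ insdel_dist a b) a b" unfolding insdel_dist_def by (rule LeastI)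
  then show ?thesis by (rule insdel_pow_common)
qed

lemma words_eq: "words q n = {xs. set xs \<subseteq> {..<q} \<and> length xs = n}"
  unfolding words_def by auto

lemma finite_words: "finite (words q n)"
  unfolding words_eq by (rule finite_lists_length_eq) simp

lemma card_words: "card (words q n) = q ^ n"
  unfolding words_eq by (subst card_lists_length_eq) simp_all

lemma binom_bound:
  fixes p :: real
  assumes "0 < p" "p < 1" "k \<le> m"
  shows "real (m choose k) * p ^ (m - k) * (1 - p) ^ k \<le> 1"
proof -
  have "(p + (1 - p)) ^ m = (\<Sum>i\<le>m. real (m choose i) * p ^ i * (1 - p) ^ (m - i))"
    by (rule binomial_ring)
  also have "\<dots> \<ge> real (m choose (m - k)) * p ^ (m - k) * (1 - p) ^ (m - (m - k))"
    by (rule member_le_sum) (use assms in auto)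
  finally show ?thesis using assms by (simp add: binomial_symmetric[symmetric])
qed

lemma nths_restrict: "nths xs N = nths xs {i \<in> N. i < length xs}"
  unfolding nths_def
  by (rule arg_cong[where f="map fst"], rule filter_cong) (auto simp: set_zip)

lemma card_subseqs:
  "card {s. subseq s r \<and> length s = k} \<le> length r choose k"
proof -
  have "{s. subseq s r \<and> length s = k} \<subseteq> nths r ` {I. I \<subseteq> {..<length r} \<and> card I = k}"
  proof
    fix s assume "s \<in> {s. subseq s r \<and> length s = k}"
    then obtain N where s: "s = nths r N" "length s = k" by (auto simp: subseq_conv_nths)
    define I where "I = {i \<in> N. i < length r}"
    have "s = nths r I" using s(1) nths_restrict unfolding I_def by metis
    moreover have "card I = k" using s length_nths[of r N] unfolding I_def by (simp add: conj_commute)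
    moreover have "I \<subseteq> {..<length r}" unfolding I_def by auto
    ultimately show "s \<in> nths r ` {I. I \<subseteq> {..<length r} \<and> card I = k}" by blast
  qed
  then have "card {s. subseq s r \<and> length s = k} \<le> card (nths r ` {I. I \<subseteq> {..<length r} \<and> card I = k})"
    by (intro card_mono) auto
  also have "\<dots> \<le> card {I. I \<subseteq> {..<length r} \<and> card I = k}" by (rule card_image_le) auto
  also have "\<dots> = length r choose k" by (subst n_subsets) auto
  finally show ?thesis .
qed

lemma p_lt1:
  fixes p :: real
  assumes "0 < p" "p \<le> (real q - 1) / real q" "q \<ge> 2"
  shows "p < 1"
proof -
  have "p * real q \<le> real q - 1" using assms by (simp add: field_simps)
  then have "p * real q < 1 * real q" by simp
  then show ?thesis using assms(3) by (simp only: mult_less_cancel_right)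
qed

lemma sup_card:
  fixes p :: real
  assumes q: "q \<ge> 2" and p: "0 < p" "p \<le> (real q - 1) / real q"
  shows "real (card {v \<in> words q n. subseq s v}) \<le>
          ((real q - 1) / p) powr (real n - real (length s)) * (1 - p) powr (- real (length s))"
  using p
proof (induction n arbitrary: s)
  case 0
  have p1: "p < 1" using p q by (rule p_lt1)
  show ?case
  proof (cases s)
    case Nil
    have "{v \<in> words q 0. subseq s v} = {[]}" using Nil by (auto simp: words_def)
    then show ?thesis using Nil p1 p q by simp
  next
    case (Cons c s')
    have e: "{v \<in> words q 0. subseq s v} = {}" using Cons by (auto simp: words_def)
    show ?thesis unfolding e using p1 p q by simp
  qed
next
  case (Suc n)
  have p1: "p < 1" using p q by (rule p_lt1)
  define X where "X = (real q - 1) / p"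
  have Xq: "X \<ge> real q" unfolding X_def using p q by (simp add: field_simps)
  have Xpos: "X > 0" using Xq q by simp
  show ?case
  proof (cases s)
    case Nil
    have "{v \<in> words q (Suc n). subseq s v} = words q (Suc n)" using Nil by auto
    then have "real (card {v \<in> words q (Suc n). subseq s v}) = real q ^ Suc n"
      by (simp add: card_words)
    also have "\<dots> \<le> X ^ Suc n" using Xq q by (intro power_mono) auto
    also have "\<dots> = X powr (real (Suc n))" using Xpos by (metis powr_realpow)
    finally show ?thesis using Nil X_def p1 by simp
  next
    case (Cons c s')
    show ?thesis
    proof (cases "c < q")
      case False
      have e: "{v \<in> words q (Suc n). subseq s v} = {}"
      proof (rule ccontr)
        assume "{v \<in> words q (Suc n). subseq s v} \<noteq> {}"
        then obtain v where v: "v \<in> words q (Suc n)" "subseq (c # s') v" using Cons by auto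
        then obtain y where "y \<in> set v" "c = y" by (auto elim: list_emb_set)
        then show False using v(1) False by (auto simp: words_def)
      qed
      show ?thesis unfolding e using p1 Xpos by (simp add: X_def[symmetric])
    next
      case True
      define A where "A = {v \<in> words q n. subseq s' v}"
      define B where "B = {v \<in> words q n. subseq (c # s') v}"
      have sub: "{v \<in> words q (Suc n). subseq s v} \<subseteq>
          (\<lambda>v. c # v) ` A \<union> (\<lambda>(x, v). x # v) ` (({..<q} - {c}) \<times> B)"
      proof
        fix v assume "v \<in> {v \<in> words q (Suc n). subseq s v}"
        then obtain x v' where v: "v = x # v'" "x < q" "v' \<in> words q n" "subseq (c # s') (x # v')"
          using Cons by (cases v) (auto simp: words_def)
        show "v \<in> (\<lambda>v. c # v) ` A \<union> (\<lambda>(x, v). x # v) ` (({..<q} - {c}) \<times> B)"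
        proof (cases "x = c")
          case True
          then have "v' \<in> A" using v unfolding A_def by simp
          then show ?thesis using v True by auto
        next
          case False
          then have "v' \<in> B" using v unfolding B_def by simp
          then show ?thesis using v False by force
        qed
      qed
      have fA: "finite A" "finite B" unfolding A_def B_def using finite_words by auto
      have "card {v \<in> words q (Suc n). subseq s v} \<le>
          card ((\<lambda>v. c # v) ` A \<union> (\<lambda>(x, v). x # v) ` (({..<q} - {c}) \<times> B))"
        using sub fA by (intro card_mono) auto
      also have "\<dots> \<le> card ((\<lambda>v. c # v) ` A) + card ((\<lambda>(x, v). x # v) ` (({..<q} - {c}) \<times> B))"
        by (rule card_Un_le)
      also have "\<dots> \<le> card A + card (({..<q} - {c}) \<times> B)"
        by (intro add_mono card_image_le) (use fA in auto)
      also have "\<dots> = card A + (q - 1) * card B" using True by (simp add: card_cartesian_product)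
      finally have "real (card {v \<in> words q (Suc n). subseq s v}) \<le> real (card A + (q - 1) * card B)"
        by (simp only: of_nat_le_iff)
      then have cardle: "real (card {v \<in> words q (Suc n). subseq s v}) \<le> real (card A) + (real q - 1) * real (card B)"
        using True by (simp add: of_nat_diff)
      define ls where "ls = real (length s')"
      have IA: "real (card A) \<le> X powr (real n - ls) * (1 - p) powr (- ls)"
        using Suc.IH[of s'] p unfolding A_def X_def ls_def by simp
      have IB: "real (card B) \<le> X powr (real n - (ls + 1)) * (1 - p) powr (- (ls + 1))"
        using Suc.IH[of "c # s'"] p unfolding B_def X_def ls_def by (simp add: add.commute)
      define E where "E = X powr (real n - ls) * (1 - p) powr (- (ls + 1))"
      have eA: "X powr (real n - ls) * (1 - p) powr (- ls) = E * (1 - p)"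
        unfolding E_def using p1 by (simp add: powr_add[symmetric] powr_diff)
      have eB: "(real q - 1) * (X powr (real n - (ls + 1)) * (1 - p) powr (- (ls + 1))) = E * p"
      proof -
        have "X powr (real n - (ls + 1)) = X powr (real n - ls) / X"
          using Xpos by (simp add: powr_diff diff_diff_eq[symmetric] del: diff_diff_eq)
        have "(real q - 1) / X = p" unfolding X_def using p q by (simp add: field_simps)
        have "(real q - 1) * (X powr (real n - (ls + 1)) * (1 - p) powr (- (ls + 1)))
           = (real q - 1) * (X powr (real n - ls) / X * (1 - p) powr (- (ls + 1)))"
          by (simp only: \<open>X powr (real n - (ls + 1)) = X powr (real n - ls) / X\<close>)
        also have "\<dots> = ((real q - 1) / X) * (X powr (real n - ls) * (1 - p) powr (- (ls + 1)))"
          using Xpos by (simp add: field_simps)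
        finally have "(real q - 1) * (X powr (real n - (ls + 1)) * (1 - p) powr (- (ls + 1)))
           = ((real q - 1) / X) * (X powr (real n - ls) * (1 - p) powr (- (ls + 1)))" .
        then show ?thesis unfolding E_def using \<open>(real q - 1) / X = p\<close> by (simp add: mult_ac)
      qed
      have "real (card A) + (real q - 1) * real (card B) \<le> E * (1 - p) + E * p"
      proof -
        have "(real q - 1) * real (card B) \<le> (real q - 1) * (X powr (real n - (ls + 1)) * (1 - p) powr (- (ls + 1)))"
          using IB q by (intro mult_left_mono) auto
        then show ?thesis using IA eA eB by linarith
      qed
      also have "\<dots> = E" by (simp add: algebra_simps)
      finally have fin: "real (card A) + (real q - 1) * real (card B) \<le> E" .
      have "E = ((real q - 1) / p) powr (real (Suc n) - real (length s)) * (1 - p) powr (- real (length s))"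
        unfolding E_def X_def ls_def Cons by (simp add: algebra_simps)
      then show ?thesis using cardle fin by linarith
    qed
  qed
qed

lemma le_powr_from_ln:
  fixes x b E :: real
  assumes "0 < x" "1 < b" "ln x \<le> E * ln b"
  shows "x \<le> b powr E"
proof -
  have "x = exp (ln x)" using assms by simp
  also have "\<dots> \<le> exp (E * ln b)" by (subst exp_le_cancel_iff) (rule assms(3))
  also have "\<dots> = b powr E" using assms by (simp add: powr_def)
  finally show ?thesis .
qed

lemma binom_T1:
  fixes m k n q :: nat and g kk :: real
  assumes q: "q \<ge> 2" and n: "n > 0" and g: "0 \<le> g" and kk: "0 \<le> kk" "kk < 1"
    and m: "real m = real n * (1 + g - kk)" and mk: "real m - real k \<le> g * real n" and km: "k \<le> m"
  shows "real (m choose k) \<le> real q powr (real n * ((2*g - kk + 1) * Hq q (g / (2*g - kk + 1)) - g * log q (q - 1)))"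
proof (cases "g = 0")
  case True
  then have "k = m" using mk km by simp
  then show ?thesis using True q by (simp add: Hq_def)
next
  case False
  then have gp: "g > 0" using g by simp
  define N where "N = 2*g - kk + 1"
  define P where "P = g / N"
  have Ng: "N - g > 0" unfolding N_def using kk gp by simp
  have Npos: "N > 0" using Ng gp by simp
  have P0: "0 < P" unfolding P_def using gp Npos by simp
  have P1: "P < 1" unfolding P_def using Ng Npos by simp
  have NP: "N * P = g" unfolding P_def using Npos by simp
  have N1P: "N * (1 - P) = N - g" using NP by (simp add: algebra_simps)
  have mN: "real m = real n * (N - g)" unfolding N_def using m by simp
  have bb: "real (m choose k) * P ^ (m - k) * (1 - P) ^ k \<le> 1"
    using binom_bound[OF P0 P1 km] .
  have Cpos: "real (m choose k) > 0" using km by simp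
  have "ln (real (m choose k) * P ^ (m - k) * (1 - P) ^ k) \<le> 0"
    using bb Cpos P0 P1 by (subst ln_le_zero_iff) auto
  then have l1: "ln (real (m choose k)) + real (m - k) * ln P + real k * ln (1 - P) \<le> 0"
    using Cpos P0 P1 by (simp add: ln_mult ln_realpow)
  have lnP: "ln P < 0" using P0 P1 by simp
  have ln1P: "ln (1 - P) < 0" using P0 P1 by simp
  have "real (m - k) * ln P \<ge> g * real n * ln P"
    using mk km lnP by (simp add: of_nat_diff mult_right_mono_neg)
  moreover have "real k * ln (1 - P) \<ge> real m * ln (1 - P)"
    using km ln1P by (simp add: mult_right_mono_neg)
  ultimately have l2: "ln (real (m choose k)) \<le> - (g * real n * ln P) - real m * ln (1 - P)"
    using l1 by linarith
  have lnq: "ln (real q) > 0" using q by simp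
  have "(real n * (N * Hq q P - g * log q (q - 1))) * ln (real q)
        = real n * (N * (P * ln (real (q - 1)) - P * ln P - (1 - P) * ln (1 - P)) - g * ln (real (q - 1)))"
    unfolding Hq_def log_def using P0 P1 lnq by (simp add: field_simps)
  also have "\<dots> = real n * (- (N * P) * ln P - (N * (1 - P)) * ln (1 - P) + (N * P - g) * ln (real (q - 1)))"
    by (simp add: algebra_simps)
  also have "\<dots> = - (g * real n * ln P) - real m * ln (1 - P)"
    unfolding NP N1P mN by (simp add: algebra_simps)
  finally have eq: "(real n * (N * Hq q P - g * log q (q - 1))) * ln (real q) = - (g * real n * ln P) - real m * ln (1 - P)" .
  show ?thesis unfolding N_def[symmetric] P_def[symmetric]
    by (rule le_powr_from_ln) (use Cpos q l2 eq in auto)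
qed

lemma sup_T2:
  fixes q n :: nat and kk :: real
  assumes q: "q \<ge> 2" and kk: "0 \<le> kk" "kk \<le> (real q - 1) / real q"
    and nk: "real n - real (length s) \<le> kk * real n"
  shows "real (card {v \<in> words q n. subseq s v}) \<le> real q powr (real n * Hq q kk)"
proof (cases "card {v \<in> words q n. subseq s v} = 0")
  case True
  then show ?thesis by simp
next
  case False
  then have cpos: "real (card {v \<in> words q n. subseq s v}) > 0" by simp
  show ?thesis
  proof (cases "kk = 0")
    case True
    have "{v \<in> words q n. subseq s v} \<subseteq> {s}"
    proof
      fix v assume "v \<in> {v \<in> words q n. subseq s v}"
      then have v: "length v = n" "subseq s v" by (auto simp: words_def)
      then have "length s \<le> length v" by (metis list_emb_length)
      then have "length s = length v" using nk True v by simp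
      then have "s = v" using subseq_same_length v(2) by blast
      then show "v \<in> {s}" by simp
    qed
    then have "card {v \<in> words q n. subseq s v} \<le> 1"
      using card_mono[of "{s}" "{v \<in> words q n. subseq s v}"] by simp
    then show ?thesis using True q by (simp add: Hq_def)
  next
    case False
    then have k0: "kk > 0" using kk by simp
    have k1: "kk < 1" using p_lt1[OF k0 kk(2) q] .
    have q1: "real (q - 1) = real q - 1" using q by (simp add: of_nat_diff)
    have sc: "real (card {v \<in> words q n. subseq s v}) \<le>
          ((real q - 1) / kk) powr (real n - real (length s)) * (1 - kk) powr (- real (length s))"
      by (rule sup_card[OF q k0 kk(2)])
    define a where "a = real n - real (length s)"
    have l1: "ln (real (card {v \<in> words q n. subseq s v})) \<le> a * ln ((real q - 1) / kk) - real (length s) * ln (1 - kk)"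
    proof -
      have "ln (real (card {v \<in> words q n. subseq s v})) \<le>
          ln (((real q - 1) / kk) powr (real n - real (length s)) * (1 - kk) powr (- real (length s)))"
        using sc cpos by (subst ln_le_cancel_iff) (use k0 k1 q in auto)
      also have "\<dots> = a * ln ((real q - 1) / kk) - real (length s) * ln (1 - kk)"
        unfolding a_def using k0 k1 q by (simp add: ln_mult ln_powr)
      finally show ?thesis .
    qed
    define br where "br = ln ((real q - 1) / kk) + ln (1 - kk)"
    have brpos: "br \<ge> 0"
    proof -
      have "(real q - 1) * (1 - kk) \<ge> kk" using kk q by (simp add: field_simps)
      then have "(real q - 1) / kk * (1 - kk) \<ge> 1" using k0 by (simp add: field_simps)
      then have "ln ((real q - 1) / kk * (1 - kk)) \<ge> 0" by simp
      moreover have "ln ((real q - 1) / kk * (1 - kk)) = ln ((real q - 1) / kk) + ln (1 - kk)"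
        using k0 k1 q by (intro ln_mult_pos) auto
      ultimately show ?thesis unfolding br_def by linarith
    qed
    have "a * ln ((real q - 1) / kk) - real (length s) * ln (1 - kk) = a * br - real n * ln (1 - kk)"
      unfolding a_def br_def by (simp add: algebra_simps)
    also have "\<dots> \<le> (kk * real n) * br - real n * ln (1 - kk)"
      using nk brpos unfolding a_def by (simp add: mult_right_mono)
    also have "\<dots> = (real n * Hq q kk) * ln (real q)"
      unfolding br_def Hq_def log_def q1 using k0 k1 q by (simp add: field_simps ln_div)
    finally show ?thesis using l1 cpos q by (intro le_powr_from_ln) auto
  qed
qed

definition fval :: "nat \<Rightarrow> real \<Rightarrow> real \<Rightarrow> real" where
  "fval q g k = 1 - (2*g - k + 1) * Hq q (g / (2*g - k + 1)) + g * log q (real (q - 1)) - Hq q k"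

definition Sset :: "nat \<Rightarrow> real \<Rightarrow> (real \<times> real) set" where
  "Sset q tau = {(g, k). 0 \<le> g \<and> g < real q - 1 \<and> 0 \<le> k \<and> k < (real q - 1) / q \<and> g + k = tau}"

lemma rate_fun_alt: "rate_fun q tau = (INF p \<in> Sset q tau. fval q (fst p) (snd p))"
  unfolding rate_fun_def Sset_def fval_def by (simp add: case_prod_beta)

lemma Hq_upper:
  assumes q: "q \<ge> 2"
  shows "Hq q x \<le> log q (real (q - 1)) + 2 / ln q"
proof -
  have lq: "ln (real q) > 0" using q by simp
  have l0: "log q (real (q - 1)) \<ge> 0" using q by simp
  have key: "- (y * ln y) \<le> 1" if "0 < y" for y :: real
  proof -
    have "ln (1 / y) \<le> 1 / y - 1" using that by (intro ln_le_minus_one) auto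
    then have "- ln y \<le> 1 / y - 1" using that by (simp add: ln_div)
    then have "y * (- ln y) \<le> y * (1 / y - 1)" using that by (intro mult_left_mono) auto
    then show ?thesis using that by (simp add: algebra_simps)
  qed
  show ?thesis
  proof (cases "0 < x \<and> x < 1")
    case True
    have a: "x * log q (real (q - 1)) \<le> log q (real (q - 1))" using True l0 by (intro mult_left_le_one_le) auto
    have b: "- (x * log q x) \<le> 1 / ln q"
    proof -
      have "- (x * log q x) = (- (x * ln x)) / ln q" unfolding log_def by simp
      also have "\<dots> \<le> 1 / ln q" using key[of x] True lq by (intro divide_right_mono) auto
      finally show ?thesis .
    qed
    have c: "- ((1 - x) * log q (1 - x)) \<le> 1 / ln q"
    proof -
      have "- ((1 - x) * log q (1 - x)) = (- ((1 - x) * ln (1 - x))) / ln q" unfolding log_def by simp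
      also have "\<dots> \<le> 1 / ln q" using key[of "1 - x"] True lq by (intro divide_right_mono) auto
      finally show ?thesis .
    qed
    show ?thesis unfolding Hq_def using True a b c by simp
  next
    case False
    then have "Hq q x = 0" unfolding Hq_def by auto
    then show ?thesis using l0 lq by simp
  qed
qed

lemma fval_bdd:
  assumes q: "q \<ge> 3"
  shows "bdd_below ((\<lambda>p. fval q (fst p) (snd p)) ` Sset q tau)"
proof -
  define B where "B = log q (real (q - 1)) + 2 / ln q"
  have lq: "ln (real q) > 0" using q by simp
  have B0: "B \<ge> 0" unfolding B_def using q lq by simp
  have "fval q g k \<ge> 1 - 2 * real q * B - B" if "(g, k) \<in> Sset q tau" for g k
  proof -
    from that have h: "0 \<le> g" "g < real q - 1" "0 \<le> k" "k < (real q - 1) / q"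
      unfolding Sset_def by auto
    have k1: "k < 1" using p_lt1[of k q] h q by (cases "k = 0") auto
    define N where "N = 2*g - k + 1"
    have N0: "N \<ge> 0" "N \<le> 2 * real q" unfolding N_def using h k1 by auto
    have "N * Hq q (g / N) \<le> N * B" unfolding B_def using Hq_upper[of q "g / N"] q N0
      by (intro mult_left_mono) auto
    also have "\<dots> \<le> 2 * real q * B" using N0 B0 by (intro mult_right_mono) auto
    finally have 1: "N * Hq q (g / N) \<le> 2 * real q * B" .
    have 2: "Hq q k \<le> B" unfolding B_def using Hq_upper[of q k] q by simp
    have 3: "g * log q (real (q - 1)) \<ge> 0" using h q by simp
    show ?thesis unfolding fval_def N_def[symmetric] using 1 2 3 by linarith
  qed
  then show ?thesis unfolding bdd_below_def by fastforce
qed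

lemma rate_le_fval:
  assumes "q \<ge> 3" "(g, k) \<in> Sset q tau"
  shows "rate_fun q tau \<le> fval q g k"
  unfolding rate_fun_alt
  using cINF_lower[OF fval_bdd[OF assms(1)] assms(2)] by simp

lemma ball_bound:
  fixes q n m :: nat and tau :: real and r :: "nat list"
  assumes q: "q \<ge> 3" and tau: "tau \<ge> 0" "tau < (real q - 1) / q" and n: "n > 0"
    and r: "r \<in> words q m"
    and m1: "max 0 (real n - tau * real n) \<le> real m" and m2: "real m \<le> real n + tau * real n"
  shows "real (card (insdel_ball q r (tau * real n) \<inter> words q n)) \<le> real q powr (real n * (1 - rate_fun q tau))"
proof -
  define k' where "k' = nat \<lceil>(real m + real n - tau * real n) / 2\<rceil>"
  have hk: "real k' \<ge> (real m + real n - tau * real n) / 2"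
    unfolding k'_def by linarith
  have lr: "length r = m" using r by (simp add: words_def)
  define Sub where "Sub = {s. subseq s r \<and> length s = k'}"
  have fSub: "finite Sub"
  proof -
    have "Sub \<subseteq> set (subseqs r)" unfolding Sub_def by auto
    then show ?thesis using finite_subset by blast
  qed
  have cover: "insdel_ball q r (tau * real n) \<inter> words q n \<subseteq> (\<Union>s\<in>Sub. {v \<in> words q n. subseq s v})"
  proof
    fix v assume v: "v \<in> insdel_ball q r (tau * real n) \<inter> words q n"
    then have lv: "length v = n" and dv: "real (insdel_dist r v) \<le> tau * real n"
      by (auto simp: words_def insdel_ball_def)
    obtain s where s: "subseq s r" "subseq s v" "length r + length v \<le> insdel_dist r v + 2 * length s"
      using insdel_dist_common by blast
    have "real m + real n \<le> real (insdel_dist r v) + 2 * real (length s)"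
      using s(3) lr lv by (metis of_nat_add of_nat_le_iff of_nat_mult of_nat_numeral)
    then have "(real m + real n - tau * real n) / 2 \<le> real (length s)" using dv by simp
    then have "k' \<le> length s" unfolding k'_def by (simp add: nat_le_iff ceiling_le_iff)
    define s' where "s' = take k' s"
    have "subseq s' s" unfolding s'_def by (rule prefix_imp_subseq) (rule take_is_prefix)
    then have "subseq s' r" "subseq s' v" using s by (auto intro: subseq_order.trans)
    moreover have "length s' = k'" unfolding s'_def using \<open>k' \<le> length s\<close> by simp
    ultimately have "s' \<in> Sub" unfolding Sub_def by simp
    then show "v \<in> (\<Union>s\<in>Sub. {v \<in> words q n. subseq s v})" using v \<open>subseq s' v\<close> by auto
  qed
  define g0 where "g0 = (real m - real n + tau * real n) / (2 * real n)"
  define k0 where "k0 = (real n - real m + tau * real n) / (2 * real n)"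
  have nr: "real n > 0" using n by simp
  have g0n: "g0 * real n = (real m - real n + tau * real n) / 2" unfolding g0_def using nr by simp
  have k0n: "k0 * real n = (real n - real m + tau * real n) / 2" unfolding k0_def using nr by simp
  have m1': "real n - tau * real n \<le> real m" using m1 by simp
  have "g0 * real n \<ge> 0" using g0n m1' by simp
  then have g0: "g0 \<ge> 0" using nr by (simp add: zero_le_mult_iff)
  have "k0 * real n \<ge> 0" using k0n m2 by simp
  then have k0: "k0 \<ge> 0" using nr by (simp add: zero_le_mult_iff)
  have "(g0 + k0) * real n = tau * real n" using g0n k0n by (simp add: algebra_simps add_divide_distrib[symmetric])
  then have sum: "g0 + k0 = tau" using nr by simp
  have qq: "(real q - 1) / real q < 1" using q by simp
  have k0le: "k0 \<le> (real q - 1) / real q" using sum g0 tau by linarith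
  have k0lt: "k0 < (real q - 1) / real q" using sum g0 tau by linarith
  have g0lt: "g0 < real q - 1" using sum k0 tau qq q by linarith
  have inS: "(g0, k0) \<in> Sset q tau" unfolding Sset_def using g0 k0 k0lt g0lt sum by simp
  have k01: "k0 < 1" using k0lt qq by linarith
  have mform: "real m = real n * (1 + g0 - k0)" using g0n k0n by (simp add: algebra_simps add_divide_distrib[symmetric] diff_divide_distrib[symmetric])
  define T1 where "T1 = (2*g0 - k0 + 1) * Hq q (g0 / (2*g0 - k0 + 1)) - g0 * log q (real (q - 1))"
  have cSub: "real (card Sub) \<le> real q powr (real n * T1)"
  proof -
    have "card Sub \<le> m choose k'" unfolding Sub_def using card_subseqs[of r k'] lr by simp
    moreover have "real (m choose k') \<le> real q powr (real n * T1)"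
    proof (cases "k' \<le> m")
      case True
      show ?thesis unfolding T1_def
      proof (rule binom_T1)
        have "2 * (g0 * real n) = real m - real n + tau * real n" using g0n by simp
        moreover have "2 * real k' \<ge> real m + real n - tau * real n" using hk by simp
        ultimately show "real m - real k' \<le> g0 * real n" by linarith
      qed (use q n g0 k0 k01 mform True in auto)
    next
      case False
      then show ?thesis by (simp add: binomial_eq_0)
    qed
    ultimately show ?thesis by (meson of_nat_le_iff order_trans)
  qed
  have cSup: "real (card {v \<in> words q n. subseq s v}) \<le> real q powr (real n * Hq q k0)" if "s \<in> Sub" for s
  proof (rule sup_T2)
    show "real n - real (length s) \<le> k0 * real n"
      using that hk k0n unfolding Sub_def by simp
  qed (use q k0 k0le in auto)
  have "real (card (insdel_ball q r (tau * real n) \<inter> words q n))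
      \<le> real (card (\<Union>s\<in>Sub. {v \<in> words q n. subseq s v}))"
    using cover fSub finite_words by (intro of_nat_mono card_mono) auto
  also have "\<dots> \<le> real (\<Sum>s\<in>Sub. card {v \<in> words q n. subseq s v})"
    by (intro of_nat_mono card_UN_le fSub)
  also have "\<dots> = (\<Sum>s\<in>Sub. real (card {v \<in> words q n. subseq s v}))" by simp
  also have "\<dots> \<le> (\<Sum>s\<in>Sub. real q powr (real n * Hq q k0))" by (intro sum_mono cSup)
  also have "\<dots> = real (card Sub) * real q powr (real n * Hq q k0)" by simp
  also have "\<dots> \<le> real q powr (real n * T1) * real q powr (real n * Hq q k0)"
    by (intro mult_right_mono cSub) auto
  also have "\<dots> = real q powr (real n * (1 - fval q g0 k0))"
    unfolding fval_def T1_def by (simp add: powr_add[symmetric] algebra_simps)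
  also have "\<dots> \<le> real q powr (real n * (1 - rate_fun q tau))"
    using rate_le_fval[OF q inS] q nr by (intro powr_mono) (auto intro: mult_left_mono)
  finally show ?thesis .
qed

lemma fval_le:
  assumes q: "q \<ge> 3" and h: "(g, k) \<in> Sset q tau"
  shows "fval q g k \<le> 1 - Hq q k"
proof -
  from h have h: "0 \<le> g" "g < real q - 1" "0 \<le> k" "k < (real q - 1) / q"
    unfolding Sset_def by auto
  have k1: "k < 1" using p_lt1[of k q] h q by (cases "k = 0") auto
  define N where "N = 2*g - k + 1"
  have "N * Hq q (g / N) - g * log q (real (q - 1)) \<ge> 0"
  proof (cases "g = 0")
    case True then show ?thesis by (simp add: Hq_def)
  next
    case False
    then have gp: "g > 0" using h by simp
    define P where "P = g / N"
    have Ng: "N - g > 0" unfolding N_def using k1 gp by simp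
    have Npos: "N > 0" using Ng gp by simp
    have P0: "0 < P" unfolding P_def using gp Npos by simp
    have P1: "P < 1" unfolding P_def using Ng Npos by simp
    have NP: "N * P = g" unfolding P_def using Npos by simp
    have N1P: "N * (1 - P) = N - g" using NP by (simp add: algebra_simps)
    have "N * Hq q P - g * log q (real (q - 1)) = N * (P * log q (real (q - 1)) - P * log q P - (1 - P) * log q (1 - P)) - g * log q (real (q - 1))"
      unfolding Hq_def using P0 P1 by simp
    also have "\<dots> = - ((N * P) * log q P) - (N * (1 - P)) * log q (1 - P) + (N * P - g) * log q (real (q - 1))"
      by (simp add: algebra_simps)
    also have "\<dots> = - (g * log q P) - (N - g) * log q (1 - P)" unfolding NP N1P by simp
    finally have eq: "N * Hq q P - g * log q (real (q - 1)) = - (g * log q P) - (N - g) * log q (1 - P)" .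
    have "log q P < 0" using P0 P1 q by simp
    moreover have "log q (1 - P) < 0" using P0 P1 q by simp
    ultimately have "- (g * log q P) \<ge> 0" "- ((N - g) * log q (1 - P)) \<ge> 0"
      using gp Ng by (simp_all add: mult_pos_neg mult_le_0_iff)
    then show ?thesis unfolding P_def[symmetric] eq by linarith
  qed
  then show ?thesis unfolding fval_def N_def[symmetric] by linarith
qed

lemma rate_nonpos:
  assumes q: "q \<ge> 3" and tau: "tau \<ge> (real q - 1) / q" and ne: "Sset q tau \<noteq> {}"
  shows "rate_fun q tau \<le> 0"
proof (rule field_le_epsilon)
  fix d :: real assume d: "0 < d"
  define x0 where "x0 = (real q - 1) / q"
  have x00: "0 < x0" "x0 < 1" unfolding x0_def using q by auto
  obtain g k where gk: "(g, k) \<in> Sset q tau" using ne by auto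
  then have upper: "tau - (real q - 1) < x0" unfolding Sset_def x0_def by auto
  define h where "h = (\<lambda>x::real. x * log q (real (q - 1)) - x * log q x - (1 - x) * log q (1 - x))"
  have q1: "real (q - 1) = real q - 1" using q by (simp add: of_nat_diff)
  have hx0: "h x0 = 1"
  proof -
    have a: "log q x0 = log q (real q - 1) - 1" unfolding x0_def using q by (simp add: log_divide)
    have b: "1 - x0 = 1 / real q" unfolding x0_def using q by (simp add: field_simps)
    have c: "log q (1 / real q) = - 1" using q by (simp add: log_divide)
    show ?thesis unfolding h_def a b c q1 unfolding x0_def using q by (simp add: field_simps)
  qed
  have lim: "(h \<longlongrightarrow> h x0) (at_left x0)"
    unfolding h_def using x00 q by (intro tendsto_intros) auto
  then have ev1: "eventually (\<lambda>x. h x > 1 - d) (at_left x0)"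
    using hx0 d by (intro order_tendstoD(1)) auto
  have "max 0 (tau - (real q - 1)) < x0" using upper x00 by simp
  from eventually_at_left_real[OF this]
  have ev2: "eventually (\<lambda>x. max 0 (tau - (real q - 1)) < x \<and> x < x0) (at_left x0)"
    by (rule eventually_mono) auto
  obtain x where x: "h x > 1 - d" "max 0 (tau - (real q - 1)) < x" "x < x0"
    using eventually_happens[OF eventually_conj[OF ev1 ev2]] by auto
  have inS: "(tau - x, x) \<in> Sset q tau"
    unfolding Sset_def using x tau unfolding x0_def by auto
  have "Hq q x = h x" unfolding Hq_def h_def using x x00 by auto
  have "rate_fun q tau \<le> fval q (tau - x) x" by (rule rate_le_fval[OF q inS])
  also have "\<dots> \<le> 1 - Hq q x" by (rule fval_le[OF q inS])
  finally show "rate_fun q tau \<le> 0 + d" using x(1) \<open>Hq q x = h x\<close> by simp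
qed

lemma choose_ratio:
  fixes M NW l :: nat
  assumes "M \<le> NW"
  shows "real (M choose l) * real NW ^ l \<le> real M ^ l * real (NW choose l)"
proof (induction l)
  case 0 then show ?case by simp
next
  case (Suc l)
  show ?case
  proof (cases "Suc l \<le> M")
    case False
    then show ?thesis by (simp add: binomial_eq_0)
  next
    case True
    have idM: "real (M choose Suc l) * real (Suc l) = real (M choose l) * (real M - real l)"
    proof -
      have "Suc l * (M choose Suc l) = M * ((M - 1) choose l)"
        using times_binomial_minus1_eq[of "Suc l" M] by simp
      also have "\<dots> = (M - l) * (M choose l)" by (rule binomial_absorb_comp[symmetric])
      finally have "real (Suc l * (M choose Suc l)) = real ((M - l) * (M choose l))" by simp
      then show ?thesis using True by (simp add: of_nat_diff algebra_simps)
    qed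
    have idN: "real (NW choose Suc l) * real (Suc l) = real (NW choose l) * (real NW - real l)"
    proof -
      have "Suc l * (NW choose Suc l) = NW * ((NW - 1) choose l)"
        using times_binomial_minus1_eq[of "Suc l" NW] by simp
      also have "\<dots> = (NW - l) * (NW choose l)" by (rule binomial_absorb_comp[symmetric])
      finally have "real (Suc l * (NW choose Suc l)) = real ((NW - l) * (NW choose l))" by simp
      then show ?thesis using True assms by (simp add: of_nat_diff algebra_simps)
    qed
    have f2: "(real M - real l) * real NW \<le> real M * (real NW - real l)"
    proof -
      have "real M * real l \<le> real NW * real l" using assms by (intro mult_right_mono) auto
      then show ?thesis by (simp add: algebra_simps)
    qed
    have "real (M choose Suc l) * real NW ^ Suc l * real (Suc l)
        = (real (M choose Suc l) * real (Suc l)) * (real NW ^ l * real NW)"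
      by (simp only: power_Suc mult_ac)
    also have "\<dots> = (real (M choose l) * (real M - real l)) * (real NW ^ l * real NW)"
      by (simp only: idM)
    also have "\<dots> = (real (M choose l) * real NW ^ l) * ((real M - real l) * real NW)"
      by (simp only: mult_ac)
    also have "\<dots> \<le> (real M ^ l * real (NW choose l)) * (real M * (real NW - real l))"
    proof (rule mult_mono[OF Suc.IH f2])
      show "0 \<le> real M ^ l * real (NW choose l)" by simp
      show "0 \<le> (real M - real l) * real NW" using True by simp
    qed
    also have "\<dots> = real M ^ Suc l * (real (NW choose l) * (real NW - real l))"
      by (simp only: power_Suc mult_ac)
    also have "\<dots> = real M ^ Suc l * real (NW choose Suc l) * real (Suc l)"
      by (simp only: idN[symmetric] mult_ac)
    finally show ?thesis by (simp only: mult_le_cancel_right)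
  qed
qed

lemma card_supsets:
  assumes fW: "finite W" and S: "S \<subseteq> W" "card S = l" and lM: "l \<le> M"
  shows "card {C. C \<subseteq> W \<and> card C = M \<and> S \<subseteq> C} = (card W - l) choose (M - l)"
proof -
  have fS: "finite S" using fW S finite_subset by blast
  have "bij_betw (\<lambda>D. D \<union> S) {D. D \<subseteq> W - S \<and> card D = M - l} {C. C \<subseteq> W \<and> card C = M \<and> S \<subseteq> C}"
  proof (rule bij_betwI[where g = "\<lambda>C. C - S"])
    show "(\<lambda>D. D \<union> S) \<in> {D. D \<subseteq> W - S \<and> card D = M - l} \<rightarrow> {C. C \<subseteq> W \<and> card C = M \<and> S \<subseteq> C}"
    proof
      fix D assume D: "D \<in> {D. D \<subseteq> W - S \<and> card D = M - l}"
      then have fD: "finite D" using fW finite_subset by blast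
      have "card (D \<union> S) = card D + card S" using D fD fS by (intro card_Un_disjoint) auto
      then show "D \<union> S \<in> {C. C \<subseteq> W \<and> card C = M \<and> S \<subseteq> C}" using D S lM by auto
    qed
    show "(\<lambda>C. C - S) \<in> {C. C \<subseteq> W \<and> card C = M \<and> S \<subseteq> C} \<rightarrow> {D. D \<subseteq> W - S \<and> card D = M - l}"
    proof
      fix C assume C: "C \<in> {C. C \<subseteq> W \<and> card C = M \<and> S \<subseteq> C}"
      then have fC: "finite C" using fW finite_subset by blast
      have "card (C - S) = card C - card S" using C fS by (intro card_Diff_subset) auto
      then show "C - S \<in> {D. D \<subseteq> W - S \<and> card D = M - l}" using C S by auto
    qed
  qed auto
  then have "card {C. C \<subseteq> W \<and> card C = M \<and> S \<subseteq> C} = card {D. D \<subseteq> W - S \<and> card D = M - l}"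
    by (simp add: bij_betw_same_card)
  also have "\<dots> = card (W - S) choose (M - l)" using fW by (intro n_subsets) auto
  also have "card (W - S) = card W - l" using S fS by (simp add: card_Diff_subset)
  finally show ?thesis .
qed

lemma geom_sum_le: "(q::nat) \<ge> 2 \<Longrightarrow> (\<Sum>m\<le>K. q ^ m) < q ^ Suc K"
proof (induction K)
  case 0 then show ?case by simp
next
  case (Suc K)
  then have "(\<Sum>m\<le>Suc K. q ^ m) < q ^ Suc K + q ^ Suc K" by simp
  also have "\<dots> = 2 * q ^ Suc K" by simp
  also have "\<dots> \<le> q * q ^ Suc K" using Suc.prems by (intro mult_le_mono1)
  also have "\<dots> = q ^ Suc (Suc K)" by simp
  finally show ?case .
qed

lemma bad_bound:
  fixes q n M :: nat and tau eps c :: real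
  assumes q: "q \<ge> 3" and tau: "tau \<ge> 0" and ne: "Sset q tau \<noteq> {}"
    and n: "n \<ge> 1" and eps: "0 < eps" "eps < 1" and c: "c = 3 + tau"
    and Mdef: "M = nat \<lfloor>real q powr ((rate_fun q tau - eps) * real n)\<rfloor>"
  shows "real (card {C. C \<subseteq> words q n \<and> card C = M \<and> \<not> list_decodable q n tau (c / eps) C})
          \<le> real q powr (- real n) * real (card (words q n) choose M)"
proof -
  define \<rho> where "\<rho> = rate_fun q tau"
  define W where "W = words q n"
  define NW where "NW = card W"
  define L where "L = c / eps"
  define Bad where "Bad = {C. C \<subseteq> W \<and> card C = M \<and> \<not> list_decodable q n tau L C}"
  have fW: "finite W" unfolding W_def by (rule finite_words)
  have NWq: "NW = q ^ n" unfolding NW_def W_def by (rule card_words)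
  have qr: "real q > 1" using q by simp
  have L3: "L \<ge> 3"
  proof -
    have "c \<ge> 3" using c tau by simp
    moreover have "c / eps \<ge> c" using eps \<open>c \<ge> 3\<close> by (simp add: field_simps)
    ultimately show ?thesis unfolding L_def by simp
  qed
  have Mle: "real M \<le> real q powr ((\<rho> - eps) * real n)"
    unfolding Mdef \<rho>_def by (simp add: of_nat_floor)
  have goal_conv: "?thesis \<longleftrightarrow> real (card Bad) \<le> real q powr (- real n) * real (NW choose M)"
    unfolding Bad_def W_def NW_def L_def by simp
  show ?thesis
  proof (cases "real M \<le> L \<or> M > NW")
    case True
    have "Bad = {}"
    proof (rule ccontr)
      assume "Bad \<noteq> {}"
      then obtain C where C: "C \<subseteq> W" "card C = M" "\<not> list_decodable q n tau L C" unfolding Bad_def by auto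
      have fC: "finite C" using C fW finite_subset by blast
      have "M \<le> NW" unfolding NW_def using C fW card_mono by metis
      then have hML: "real M \<le> L" using True by linarith
      have "list_decodable q n tau L C" unfolding list_decodable_def
      proof (intro allI impI ballI)
        fix m r
        have "card (insdel_ball q r (tau * real n) \<inter> C) \<le> card C" using fC by (intro card_mono) auto
        then show "real (card (insdel_ball q r (tau * real n) \<inter> C)) \<le> L" using C hML by linarith
      qed
      then show False using C by simp
    qed
    then show ?thesis unfolding goal_conv by simp
  next
    case False
    then have hML: "real M > L" and MNW: "M \<le> NW" by auto
    define L' where "L' = nat \<lfloor>L\<rfloor> + 1"
    have L'L: "real L' > L" unfolding L'_def using L3 by linarith
    have L'M: "L' \<le> M" unfolding L'_def using hML L3 by linarith
    have epsL': "eps * real L' > c" using L'L eps unfolding L_def by (simp add: field_simps)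
    have rpos: "\<rho> - eps > 0"
    proof (rule ccontr)
      assume "\<not> \<rho> - eps > 0"
      then have "(\<rho> - eps) * real n \<le> 0" by (simp add: mult_nonpos_nonneg)
      then have "real q powr ((\<rho> - eps) * real n) \<le> real q powr 0" using qr by (intro powr_mono) auto
      then have "real M \<le> 1" using Mle qr by simp
      then show False using hML L3 by simp
    qed
    have tau_lt: "tau < (real q - 1) / q"
    proof (rule ccontr)
      assume "\<not> tau < (real q - 1) / q"
      then have "\<rho> \<le> 0" unfolding \<rho>_def using rate_nonpos[OF q _ ne] by simp
      then show False using rpos eps by simp
    qed
    define Bb where "Bb = real q powr (real n * (1 - \<rho>))"
    define K where "K = nat \<lfloor>real n + tau * real n\<rfloor>"
    define Ms where "Ms = {m::nat. max 0 (real n - tau * real n) \<le> real m \<and> real m \<le> real n + tau * real n}"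
    define Subs where "Subs = (\<lambda>r. {S. S \<subseteq> insdel_ball q r (tau * real n) \<inter> W \<and> card S = L'})"
    define T where "T = (\<lambda>S. {C. C \<subseteq> W \<and> card C = M \<and> S \<subseteq> C})"
    define Y where "Y = (NW - L') choose (M - L')"
    have MsK: "Ms \<subseteq> {..K}"
    proof
      fix m assume "m \<in> Ms"
      then have "real m \<le> real n + tau * real n" unfolding Ms_def by simp
      then have "m \<le> nat \<lfloor>real n + tau * real n\<rfloor>" by (rule le_nat_floor)
      then show "m \<in> {..K}" unfolding K_def by simp
    qed
    have fMs: "finite Ms" using MsK finite_subset by blast
    have fSubs: "finite (Subs r)" for r
    proof -
      have "Subs r \<subseteq> Pow W" unfolding Subs_def by auto
      then show ?thesis using fW finite_subset by blast
    qed
    have cover: "Bad \<subseteq> (\<Union>m\<in>Ms. \<Union>r\<in>words q m. \<Union>S\<in>Subs r. T S)"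
    proof
      fix C assume "C \<in> Bad"
      then have C: "C \<subseteq> W" "card C = M" "\<not> list_decodable q n tau L C" unfolding Bad_def by auto
      then obtain m r where mr: "max 0 (real n - tau * real n) \<le> real m" "real m \<le> real n + tau * real n"
        "r \<in> words q m" "real (card (insdel_ball q r (tau * real n) \<inter> C)) > L"
        unfolding list_decodable_def by (auto simp: not_le)
      have "L' \<le> card (insdel_ball q r (tau * real n) \<inter> C)" unfolding L'_def using mr(4) L3 by linarith
      then obtain S where S: "S \<subseteq> insdel_ball q r (tau * real n) \<inter> C" "card S = L'"
        by (meson obtain_subset_with_card_n)
      have "S \<in> Subs r" unfolding Subs_def using S C by auto
      moreover have "C \<in> T S" unfolding T_def using S C by auto
      moreover have "m \<in> Ms" unfolding Ms_def using mr by simp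
      ultimately show "C \<in> (\<Union>m\<in>Ms. \<Union>r\<in>words q m. \<Union>S\<in>Subs r. T S)" using mr(3) by blast
    qed
    have cT: "card (T S) = Y" if "S \<in> Subs r" for S r
      unfolding T_def Y_def NW_def using that fW L'M unfolding Subs_def
      by (intro card_supsets) auto
    have cSubs: "real (card (Subs r)) \<le> Bb ^ L'" if "m \<in> Ms" "r \<in> words q m" for m r
    proof -
      have fB: "finite (insdel_ball q r (tau * real n) \<inter> W)" using fW by simp
      have "card (Subs r) = card (insdel_ball q r (tau * real n) \<inter> W) choose L'"
        unfolding Subs_def using n_subsets[OF fB] by simp
      also have "\<dots> \<le> card (insdel_ball q r (tau * real n) \<inter> W) ^ L'"
        by (cases "L' \<le> card (insdel_ball q r (tau * real n) \<inter> W)") (auto simp: binomial_le_pow binomial_eq_0)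
      finally have "real (card (Subs r)) \<le> real (card (insdel_ball q r (tau * real n) \<inter> W)) ^ L'"
        by (metis of_nat_le_iff of_nat_power)
      also have "\<dots> \<le> Bb ^ L'"
      proof (intro power_mono)
        show "real (card (insdel_ball q r (tau * real n) \<inter> W)) \<le> Bb"
          unfolding Bb_def \<rho>_def W_def
          by (rule ball_bound) (use q tau tau_lt n that in \<open>auto simp: Ms_def\<close>)
      qed simp
      finally show ?thesis .
    qed
    have "card Bad \<le> card (\<Union>m\<in>Ms. \<Union>r\<in>words q m. \<Union>S\<in>Subs r. T S)"
    proof (rule card_mono[OF _ cover])
      have "(\<Union>m\<in>Ms. \<Union>r\<in>words q m. \<Union>S\<in>Subs r. T S) \<subseteq> Pow W" unfolding T_def by auto
      then show "finite (\<Union>m\<in>Ms. \<Union>r\<in>words q m. \<Union>S\<in>Subs r. T S)"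
        using fW finite_subset by blast
    qed
    also have "\<dots> \<le> (\<Sum>m\<in>Ms. card (\<Union>r\<in>words q m. \<Union>S\<in>Subs r. T S))"
      by (rule card_UN_le[OF fMs])
    also have "\<dots> \<le> (\<Sum>m\<in>Ms. \<Sum>r\<in>words q m. card (\<Union>S\<in>Subs r. T S))"
      by (intro sum_mono card_UN_le finite_words)
    also have "\<dots> \<le> (\<Sum>m\<in>Ms. \<Sum>r\<in>words q m. \<Sum>S\<in>Subs r. card (T S))"
      by (intro sum_mono card_UN_le fSubs)
    also have "\<dots> = (\<Sum>m\<in>Ms. \<Sum>r\<in>words q m. card (Subs r) * Y)"
      by (intro sum.cong refl) (simp add: cT)
    finally have "real (card Bad) \<le> real (\<Sum>m\<in>Ms. \<Sum>r\<in>words q m. card (Subs r) * Y)"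
      by (simp only: of_nat_le_iff)
    also have "\<dots> = (\<Sum>m\<in>Ms. \<Sum>r\<in>words q m. real (card (Subs r)) * real Y)"
      by (simp only: of_nat_sum of_nat_mult)
    also have "\<dots> \<le> (\<Sum>m\<in>Ms. \<Sum>r\<in>words q m. Bb ^ L' * real Y)"
      by (intro sum_mono mult_right_mono cSubs) auto
    also have "\<dots> = (\<Sum>m\<in>Ms. real q ^ m) * (Bb ^ L' * real Y)"
      by (simp add: card_words sum_distrib_right)
    also have "\<dots> \<le> real q ^ Suc K * (Bb ^ L' * real Y)"
    proof (intro mult_right_mono)
      have "(\<Sum>m\<in>Ms. real q ^ m) \<le> (\<Sum>m\<le>K. real q ^ m)"
        using MsK by (intro sum_mono2) auto
      also have "\<dots> = real (\<Sum>m\<le>K. q ^ m)" by simp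
      also have "\<dots> \<le> real (q ^ Suc K)"
      proof -
        have "(\<Sum>m\<le>K. q ^ m) \<le> q ^ Suc K" using geom_sum_le[of q K] q by simp
        then show ?thesis by (simp only: of_nat_le_iff)
      qed
      finally show "(\<Sum>m\<in>Ms. real q ^ m) \<le> real q ^ Suc K" by simp
    qed (simp add: Bb_def)
    finally have b2: "real (card Bad) \<le> real q ^ Suc K * (Bb ^ L' * real Y)" .
    have YN: "real Y * real NW ^ L' \<le> real M ^ L' * real (NW choose M)"
    proof -
      have cm: "(NW choose M) * (M choose L') = (NW choose L') * Y"
        unfolding Y_def using L'M MNW by (rule choose_mult)
      have cr: "real (M choose L') * real NW ^ L' \<le> real M ^ L' * real (NW choose L')"
        using MNW by (rule choose_ratio)
      have pos: "real (NW choose L') > 0" using L'M MNW by simp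
      have "(real Y * real NW ^ L') * real (NW choose L') = real (NW choose M) * (real (M choose L') * real NW ^ L')"
        using arg_cong[OF cm, of real] by (simp add: mult_ac)
      also have "\<dots> \<le> real (NW choose M) * (real M ^ L' * real (NW choose L'))"
        using cr by (intro mult_left_mono) auto
      finally have "(real Y * real NW ^ L') * real (NW choose L') \<le> (real M ^ L' * real (NW choose M)) * real (NW choose L')"
        by (simp add: mult_ac)
      then show ?thesis using pos by simp
    qed
    have NWpos: "real NW > 0" using NWq q by simp
    have Yb: "real Y \<le> (real M / real NW) ^ L' * real (NW choose M)"
    proof -
      have "real Y \<le> real M ^ L' * real (NW choose M) / real NW ^ L'"
        using YN NWpos by (simp add: pos_le_divide_eq)
      also have "\<dots> = (real M / real NW) ^ L' * real (NW choose M)"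
        by (simp add: power_divide)
      finally show ?thesis .
    qed
    have base: "Bb * (real M / real NW) \<le> real q powr (- eps * real n)"
    proof -
      have "Bb * real M \<le> Bb * real q powr ((\<rho> - eps) * real n)"
        using Mle by (intro mult_left_mono) (auto simp: Bb_def)
      also have "\<dots> = real q powr (real n - eps * real n)"
        unfolding Bb_def by (simp add: powr_add[symmetric] algebra_simps)
      also have "\<dots> = real q powr (- eps * real n) * real NW"
        using qr by (simp add: NWq powr_add[symmetric] powr_realpow[symmetric])
      finally show ?thesis using NWpos by (simp add: field_simps)
    qed
    have "real (card Bad) \<le> real q ^ Suc K * (Bb ^ L' * ((real M / real NW) ^ L' * real (NW choose M)))"
    proof -
      have "Bb ^ L' * real Y \<le> Bb ^ L' * ((real M / real NW) ^ L' * real (NW choose M))"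
        using Yb by (rule mult_left_mono) (simp add: Bb_def)
      then have "real q ^ Suc K * (Bb ^ L' * real Y) \<le> real q ^ Suc K * (Bb ^ L' * ((real M / real NW) ^ L' * real (NW choose M)))"
        by (rule mult_left_mono) simp
      then show ?thesis using b2 by linarith
    qed
    also have "\<dots> = real q ^ Suc K * (Bb * (real M / real NW)) ^ L' * real (NW choose M)"
      by (simp only: power_mult_distrib mult.assoc)
    also have "\<dots> \<le> real q ^ Suc K * (real q powr (- eps * real n)) ^ L' * real (NW choose M)"
      using base by (intro mult_right_mono mult_left_mono power_mono) (auto simp: Bb_def)
    also have "\<dots> = real q powr (real (Suc K) - eps * real n * real L') * real (NW choose M)"
    proof -
      have e1: "(real q powr (- eps * real n)) ^ L' = real q powr (- eps * real n * real L')"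
        using qr by (simp add: powr_realpow[symmetric] powr_powr)
      have e2: "real q ^ Suc K = real q powr real (Suc K)"
        using qr by (metis powr_realpow zero_less_one order.strict_trans)
      show ?thesis unfolding e1 e2 by (simp add: powr_add[symmetric])
    qed
    also have "\<dots> \<le> real q powr (- real n) * real (NW choose M)"
    proof (intro mult_right_mono powr_mono)
      have "real K \<le> real n + tau * real n" unfolding K_def using tau by (intro of_nat_floor) simp
      moreover have "(eps * real L') * real n \<ge> c * real n"
        using epsL' n by (intro mult_right_mono) auto
      moreover have "c * real n = 3 * real n + tau * real n" using c by (simp add: algebra_simps)
      moreover have "(eps * real L') * real n = eps * real n * real L'" by (simp add: mult_ac)
      moreover have "real n \<ge> 1" using n by simp
      ultimately show "real (Suc K) - eps * real n * real L' \<le> - real n" by simp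
    qed (use qr in auto)
    finally show ?thesis unfolding goal_conv .
  qed
qed

theorem mainTheorem1:
  fixes q :: nat and tau :: real
  assumes "q \<ge> 3" and "tau \<ge> 0"
    and "{(g, k). 0 \<le> g \<and> g < real q - 1 \<and> 0 \<le> k \<and> k < (real q - 1) / q \<and> g + k = tau} \<noteq> {}"
  shows "\<exists>c > 0. \<exists>eps0 > 0. \<forall>eps. 0 < eps \<and> eps < eps0 \<longrightarrow>
          (\<exists>N. \<forall>n \<ge> N.
             (let R = rate_fun q tau - eps;
                  M = nat \<lfloor>real q powr (R * n)\<rfloor>
              in real (card (good_codes q n M tau (c / eps)))
                   \<ge> (1 - real q powr (- real n)) * real (card (words q n) choose M)))"
proof -
  have ne: "Sset q tau \<noteq> {}" using assms(3) unfolding Sset_def .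
  define c where "c = 3 + tau"
  have cpos: "c > 0" unfolding c_def using assms(2) by simp
  have main: "\<forall>eps. 0 < eps \<and> eps < 1 \<longrightarrow>
          (\<exists>N. \<forall>n \<ge> N.
             (let R = rate_fun q tau - eps;
                  M = nat \<lfloor>real q powr (R * n)\<rfloor>
              in real (card (good_codes q n M tau (c / eps)))
                   \<ge> (1 - real q powr (- real n)) * real (card (words q n) choose M)))"
  proof (intro allI impI)
    fix eps :: real assume eps: "0 < eps \<and> eps < 1"
    show "\<exists>N. \<forall>n \<ge> N.
             (let R = rate_fun q tau - eps;
                  M = nat \<lfloor>real q powr (R * n)\<rfloor>
              in real (card (good_codes q n M tau (c / eps)))
                   \<ge> (1 - real q powr (- real n)) * real (card (words q n) choose M))"
    proof (intro exI[of _ "1::nat"] allI impI)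
      fix n :: nat assume n: "n \<ge> 1"
      define M where "M = nat \<lfloor>real q powr ((rate_fun q tau - eps) * real n)\<rfloor>"
      define W where "W = words q n"
      define Good where "Good = good_codes q n M tau (c / eps)"
      define Bad where "Bad = {C. C \<subseteq> words q n \<and> card C = M \<and> \<not> list_decodable q n tau (c / eps) C}"
      have fW: "finite W" unfolding W_def by (rule finite_words)
      have un: "Good \<union> Bad = {C. C \<subseteq> W \<and> card C = M}"
        unfolding Good_def Bad_def good_codes_def W_def by auto
      have dis: "Good \<inter> Bad = {}" unfolding Good_def Bad_def good_codes_def by auto
      have fin: "finite Good" "finite Bad"
      proof -
        have "Good \<union> Bad \<subseteq> Pow W" unfolding un by auto
        then have "finite (Good \<union> Bad)" using fW finite_subset by blast
        then show "finite Good" "finite Bad" by auto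
      qed
      have "card Good + card Bad = card {C. C \<subseteq> W \<and> card C = M}"
        using card_Un_disjoint[OF fin dis] un by simp
      also have "\<dots> = card W choose M" using fW by (rule n_subsets)
      finally have cG: "real (card Good) = real (card W choose M) - real (card Bad)" by simp
      have bb: "real (card Bad) \<le> real q powr (- real n) * real (card W choose M)"
        unfolding Bad_def W_def
        by (rule bad_bound[OF assms(1) assms(2) ne n _ _ c_def M_def]) (use eps in auto)
      have "real (card Good) \<ge> (1 - real q powr (- real n)) * real (card W choose M)"
        using cG bb by (simp add: algebra_simps)
      then show "let R = rate_fun q tau - eps;
                  M = nat \<lfloor>real q powr (R * n)\<rfloor>
              in real (card (good_codes q n M tau (c / eps)))
                   \<ge> (1 - real q powr (- real n)) * real (card (words q n) choose M)"
        unfolding Let_def Good_def W_def M_def by simp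
    qed
  qed
  show ?thesis
    by (rule exI[of _ c], rule conjI[OF cpos], rule exI[of _ "1::real"], rule conjI[OF zero_less_one])
       (rule main)
qed

end
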